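(* For $n\in\{3,4\}$ and every $\delta>0$, there exists a cake-cutting instance with $n$ players exhibiting an $\alpha$-dumping paradox with respect to the egalitarian welfare (for connected divisions) with $\alpha\ge \frac n2-\delta$.
   Context: A cake is the interval $[0,1]$. There are $n$ players $1,\dots,n$; each player $i$ has a valuation $v_i$, a nonatomic countably additive probability measure on the Borel subsets of $[0,1]$. A (connected) division $x$ is a sequence $(X_1,\dots,X_n)$ of pairwise disjoint open intervals of $[0,1]$ (possibly empty), $X_i$ being the piece of player $i$; it is complete if the union of the closures of the $X_i$ equals $[0,1]$, and partial otherwise. Write $u_i(x,j)=v_i(X_j)$. $x$ is envy-free if $u_i(x,i)\ge u_i(x,j)$ for all $i,j$. Egalitarian welfare: $eg(x)=\min_i u_i(x,i)$. For $\alpha>1$, an instance exhibits an egalitarian $\alpha$-dumping paradox if there exists an envy-free partial division $y$ such that $eg(y)\ge \alpha\,eg(x)$ for every envy-free complete division $x$. *)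

theory Defs
  imports "HOL-Probability.Probability"
begin

definition nonatomic :: "'a measure \<Rightarrow> bool" where
  "nonatomic M \<longleftrightarrow> (\<forall>A\<in>sets M. emeasure M A > 0 \<longrightarrow>
      (\<exists>B\<in>sets M. B \<subseteq> A \<and> 0 < emeasure M B \<and> emeasure M B < emeasure M A))"

definition valuation :: "real measure \<Rightarrow> bool" where
  "valuation v \<longleftrightarrow> prob_space v \<and> space v = {0..1}
     \<and> sets v = sets (restrict_space borel {0..1}) \<and> nonatomic v"

definition cake_instance :: "nat \<Rightarrow> (nat \<Rightarrow> real measure) \<Rightarrow> bool" where
  "cake_instance n v \<longleftrightarrow> (\<forall>i<n. valuation (v i))"

definition open_subinterval :: "real set \<Rightarrow> bool" where
  "open_subinterval X \<longleftrightarrow> (\<exists>a b. 0 \<le> a \<and> a \<le> b \<and> b \<le> 1 \<and> X = {a<..<b})"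

definition division :: "nat \<Rightarrow> (nat \<Rightarrow> real set) \<Rightarrow> bool" where
  "division n X \<longleftrightarrow> (\<forall>i<n. open_subinterval (X i))
      \<and> (\<forall>i<n. \<forall>j<n. i \<noteq> j \<longrightarrow> X i \<inter> X j = {})"

definition complete_division :: "nat \<Rightarrow> (nat \<Rightarrow> real set) \<Rightarrow> bool" where
  "complete_division n X \<longleftrightarrow> division n X \<and> (\<Union>i<n. closure (X i)) = {0..1}"

definition partial_division :: "nat \<Rightarrow> (nat \<Rightarrow> real set) \<Rightarrow> bool" where
  "partial_division n X \<longleftrightarrow> division n X \<and> \<not> complete_division n X"

definition u :: "(nat \<Rightarrow> real measure) \<Rightarrow> (nat \<Rightarrow> real set) \<Rightarrow> nat \<Rightarrow> nat \<Rightarrow> real" where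
  "u v X i j = measure (v i) (X j)"

definition envy_free :: "nat \<Rightarrow> (nat \<Rightarrow> real measure) \<Rightarrow> (nat \<Rightarrow> real set) \<Rightarrow> bool" where
  "envy_free n v X \<longleftrightarrow> (\<forall>i<n. \<forall>j<n. u v X i i \<ge> u v X i j)"

definition eg :: "nat \<Rightarrow> (nat \<Rightarrow> real measure) \<Rightarrow> (nat \<Rightarrow> real set) \<Rightarrow> real" where
  "eg n v X = Min ((\<lambda>i. u v X i i) ` {..<n})"

definition egalitarian_dumping_paradox ::
  "nat \<Rightarrow> (nat \<Rightarrow> real measure) \<Rightarrow> real \<Rightarrow> bool" where
  "egalitarian_dumping_paradox n v \<alpha> \<longleftrightarrow> \<alpha> > 1 \<and>
     (\<exists>Y. partial_division n Y \<and> envy_free n v Y \<and>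
        (\<forall>X. complete_division n X \<and> envy_free n v X \<longrightarrow> eg n v Y \<ge> \<alpha> * eg n v X))"

end

theory Submission
  imports Defs
begin


definition ramp :: "real \<Rightarrow> real \<Rightarrow> real \<Rightarrow> real" where
  "ramp x y t = max 0 (min 1 ((t - x) / (y - x)))"

lemma ramp_mono: assumes "x < y" "s \<le> t" shows "ramp x y s \<le> ramp x y t"
proof -
  have h: "(s-x)/(y-x) \<le> (t-x)/(y-x)" using assms by (simp add: divide_right_mono)
  show ?thesis unfolding ramp_def using h by (meson max.mono min.mono order_refl)
qed

lemma ramp_cont: "x < y \<Longrightarrow> continuous_on UNIV (ramp x y)"
  unfolding ramp_def by (intro continuous_intros) auto

lemma ramp_lo: assumes "x < y" "t \<le> x" shows "ramp x y t = 0"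
proof -
  have "(t-x)/(y-x) \<le> 0" using assms by (simp add: divide_nonpos_pos)
  then show ?thesis unfolding ramp_def by (simp add: max_def min_def)
qed

lemma ramp_hi: "x < y \<Longrightarrow> y \<le> t \<Longrightarrow> ramp x y t = 1"
  unfolding ramp_def by (auto simp: min_def)

lemma ramp_bounds: "0 \<le> ramp x y t" "ramp x y t \<le> 1"
  unfolding ramp_def by auto

lemma ramp_mid: "x < y \<Longrightarrow> x \<le> t \<Longrightarrow> t \<le> y \<Longrightarrow> ramp x y t = (t - x) / (y - x)"
  unfolding ramp_def by (auto simp: min_def max_def)

definition V :: "(real \<Rightarrow> real) \<Rightarrow> real measure" where
  "V F = restrict_space (interval_measure F) {0..1}"

locale cdf_ok =
  fixes F :: "real \<Rightarrow> real"
  assumes mono: "\<And>x y. x \<le> y \<Longrightarrow> F x \<le> F y"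
    and cont: "continuous_on UNIV F"
    and F0: "\<And>t. t \<le> 0 \<Longrightarrow> F t = 0"
    and F1: "\<And>t. 1 \<le> t \<Longrightarrow> F t = 1"
begin

lemma rc: "continuous (at_right a) F"
  using cont by (meson continuous_on_eq_continuous_at continuous_within_subset open_UNIV UNIV_I subset_UNIV)

lemma Icc: "a \<le> b \<Longrightarrow> emeasure (interval_measure F) {a..b} = F b - F a"
  by (rule emeasure_interval_measure_Icc) (use mono cont in auto)

lemma Ioc: "a \<le> b \<Longrightarrow> emeasure (interval_measure F) {a<..b} = F b - F a"
  by (rule emeasure_interval_measure_Ioc) (use mono rc in auto)

lemma fin: "finite_measure (interval_measure F)"
proof -
  have "(F \<longlongrightarrow> 0) at_bot"
    by (rule tendsto_eventually) (auto simp: eventually_at_bot_linorder intro!: exI[of _ 0] F0)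
  moreover have "(F \<longlongrightarrow> 1) at_top"
    by (rule tendsto_eventually) (auto simp: eventually_at_top_linorder intro!: exI[of _ 1] F1)
  ultimately have "real_distribution (interval_measure F)"
    by (intro real_distribution_interval_measure) (use mono rc in auto)
  then show ?thesis by (simp add: real_distribution_def prob_space_def)
qed

lemma sets_V: "sets (V F) = sets (restrict_space borel {0..1})"
  unfolding V_def by (rule sets_restrict_space_cong) simp

lemma space_V: "space (V F) = {0..1}"
  unfolding V_def by (simp add: space_restrict_space)

lemma prob: "prob_space (V F)"
  unfolding V_def
  by (rule prob_space_restrict_space) (auto simp: Icc F0 F1)

lemma meas_eq: "A \<subseteq> {0..1} \<Longrightarrow> measure (V F) A = measure (interval_measure F) A"
  unfolding V_def by (rule measure_restrict_space) auto

lemma point: "measure (interval_measure F) {b} = 0"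
proof -
  have "emeasure (interval_measure F) {b..b} = 0" using Icc[of b b] by simp
  then show ?thesis by (simp add: measure_def)
qed

lemma Ioo_M: assumes "a \<le> b" shows "measure (interval_measure F) {a<..<b} = F b - F a"
proof (cases "a = b")
  case True then show ?thesis by simp
next
  case False
  interpret finite_measure "interval_measure F" by (rule fin)
  have "{a<..<b} = {a<..b} - {b}" by auto
  moreover have "measure (interval_measure F) ({a<..b} - {b}) = measure (interval_measure F) {a<..b} - measure (interval_measure F) {b}"
    using assms False by (intro finite_measure_Diff) auto
  ultimately have "measure (interval_measure F) {a<..<b} = measure (interval_measure F) {a<..b} - measure (interval_measure F) {b}"
    by simp
  moreover have "measure (interval_measure F) {a<..b} = F b - F a"
    using Ioc[OF assms] mono[OF assms] by (simp add: measure_def)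
  ultimately show ?thesis using point[of b] by simp
qed


lemma Ioo: "0 \<le> a \<Longrightarrow> a \<le> b \<Longrightarrow> b \<le> 1 \<Longrightarrow> measure (V F) {a<..<b} = F b - F a"
  by (subst meas_eq) (auto simp: Ioo_M)

lemma Vsets_Iic: "{0..1} \<inter> {..t} \<in> sets (V F)"
  unfolding sets_V sets_restrict_space by auto

lemma nonat: "nonatomic (V F)"
  unfolding nonatomic_def
proof (intro ballI impI)
  fix A assume A: "A \<in> sets (V F)" and pos: "emeasure (V F) A > 0"
  interpret P: prob_space "V F" by (rule prob)
  interpret M: finite_measure "interval_measure F" by (rule fin)
  have Asub: "A \<subseteq> {0..1}" using sets.sets_into_space[OF A] space_V by auto
  define g where "g t = measure (V F) (A \<inter> {..t})" for t
  have Ameas: "A \<inter> {..t} \<in> sets (V F)" for t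
  proof -
    have "A \<inter> ({0..1} \<inter> {..t}) \<in> sets (V F)" using A Vsets_Iic by auto
    moreover have "A \<inter> ({0..1} \<inter> {..t}) = A \<inter> {..t}" using Asub by auto
    ultimately show ?thesis by simp
  qed
  have diff: "\<bar>g t - g s\<bar> \<le> \<bar>F t - F s\<bar>" if st: "s \<le> t" for s t
  proof -
    have sub: "A \<inter> {..s} \<subseteq> A \<inter> {..t}" using st by auto
    have "g t - g s = measure (V F) (A \<inter> {..t} - A \<inter> {..s})"
      unfolding g_def using Ameas sub by (simp add: P.finite_measure_Diff)
    also have "A \<inter> {..t} - A \<inter> {..s} = A \<inter> {s<..t}" by auto
    also have "measure (V F) (A \<inter> {s<..t}) = measure (interval_measure F) (A \<inter> {s<..t})"
      using Asub by (intro meas_eq) auto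
    also have "\<dots> \<le> measure (interval_measure F) {s<..t}"
    proof (rule M.finite_measure_mono)
      show "A \<inter> {s<..t} \<subseteq> {s<..t}" by auto
    qed simp
    also have "\<dots> = F t - F s" using Ioc[OF st] mono[OF st] by (simp add: measure_def)
    finally have "g t - g s \<le> F t - F s" .
    moreover have "g s \<le> g t" unfolding g_def using Ameas sub by (intro P.finite_measure_mono) auto
    ultimately show ?thesis using mono[OF st] by simp
  qed
  have diff2: "\<bar>g t - g s\<bar> \<le> \<bar>F t - F s\<bar>" for s t
    using diff[of s t] diff[of t s] by (cases "s \<le> t") (auto simp: abs_minus_commute)
  have gc: "continuous_on UNIV g"
    unfolding continuous_on_iff
  proof (intro ballI allI impI)
    fix x e :: real assume e: "0 < e"
    from cont[unfolded continuous_on_iff] e obtain d where d: "d > 0" "\<And>x'. dist x' x < d \<Longrightarrow> dist (F x') (F x) < e"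
      by blast
    show "\<exists>d>0. \<forall>x'\<in>UNIV. dist x' x < d \<longrightarrow> dist (g x') (g x) < e"
      using d diff2 by (intro exI[of _ d]) (auto simp: dist_real_def intro: le_less_trans)
  qed
  have gm1: "g (-1) = 0"
  proof -
    have "A \<inter> {..-1} = {}" using Asub by auto
    then show ?thesis unfolding g_def by simp
  qed
  have g1: "g 1 = measure (V F) A"
  proof -
    have "A \<inter> {..1} = A" using Asub by auto
    then show ?thesis unfolding g_def by simp
  qed
  have mpos: "measure (V F) A > 0" using pos by (simp add: P.emeasure_eq_measure)
  obtain x where "g x = measure (V F) A / 2"
    using IVT'[of g "-1" "measure (V F) A / 2" 1] gm1 g1 mpos continuous_on_subset[OF gc]
    by force
  then show "\<exists>B\<in>sets (V F). B \<subseteq> A \<and> 0 < emeasure (V F) B \<and> emeasure (V F) B < emeasure (V F) A"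
    using mpos Ameas[of x]
    by (intro bexI[of _ "A \<inter> {..x}"]) (auto simp: P.emeasure_eq_measure g_def ennreal_less_iff)
qed

lemma valuation: "valuation (V F)"
  unfolding valuation_def using prob space_V sets_V nonat by auto

end



definition okp :: "(real \<Rightarrow> real) \<Rightarrow> real \<Rightarrow> bool" where
  "okp F w \<longleftrightarrow> (\<forall>x y. x \<le> y \<longrightarrow> F x \<le> F y) \<and> continuous_on UNIV F \<and> (\<forall>t\<le>0. F t = 0) \<and> (\<forall>t\<ge>1. F t = w)"

lemma okp_ramp: assumes "0 \<le> x" "x < y" "y \<le> 1" "0 \<le> c" shows "okp (\<lambda>t. c * ramp x y t) c"
  unfolding okp_def using assms
  by (auto intro!: mult_left_mono ramp_mono continuous_intros ramp_cont simp: ramp_lo ramp_hi)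

lemma okp_add: "okp F a \<Longrightarrow> okp G b \<Longrightarrow> okp (\<lambda>t. F t + G t) (a + b)"
  unfolding okp_def by (auto intro!: add_mono continuous_intros)

lemma okp_cdf: "okp F 1 \<Longrightarrow> cdf_ok F"
  unfolding okp_def cdf_ok_def by auto

lemma okp_cong: "okp F a \<Longrightarrow> a = b \<Longrightarrow> okp F b" by simp




definition FQ3 :: "real \<Rightarrow> real" where
  "FQ3 t = 1/3 * ramp (1/5) (2/5) t + 1/3 * ramp (2/5) (3/5) t + 1/3 * ramp (4/5) 1 t"
definition FR3 :: "real \<Rightarrow> real \<Rightarrow> real" where
  "FR3 e t = 2*e * ramp 0 (1/5) t + (1/2 - e) * ramp (1/5) (2/5) t + (1/2 - e) * ramp (4/5) 1 t"
definition FW3 :: "real \<Rightarrow> real" where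
  "FW3 t = 1 * ramp (3/5) (4/5) t"

lemma cdf_FQ3: "cdf_ok FQ3"
  unfolding FQ3_def
  by (rule okp_cdf, rule okp_cong[where a="1/3+1/3+1/3"]) (intro okp_add okp_ramp | simp)+

lemma cdf_FR3: "0 \<le> e \<Longrightarrow> e \<le> 1/2 \<Longrightarrow> cdf_ok (FR3 e)"
  unfolding FR3_def
  by (rule okp_cdf, rule okp_cong[where a="2*e+(1/2-e)+(1/2-e)"]) (intro okp_add okp_ramp | simp)+

lemma cdf_FW3: "cdf_ok FW3"
  unfolding FW3_def
  by (rule okp_cdf, rule okp_cong[where a="1"]) (intro okp_add okp_ramp | simp)+

lemma FQ3_vals: "FQ3 0 = 0" "FQ3 (1/5) = 0" "FQ3 (2/5) = 1/3" "FQ3 (3/5) = 2/3" "FQ3 (4/5) = 2/3" "FQ3 1 = 1"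
  by (simp_all add: FQ3_def ramp_def)
lemma FR3_vals: "FR3 e 0 = 0" "FR3 e (1/5) = 2*e" "FR3 e (2/5) = 1/2 + e" "FR3 e (3/5) = 1/2 + e" "FR3 e (4/5) = 1/2 + e" "FR3 e 1 = 1"
  by (simp_all add: FR3_def ramp_def)
lemma FW3_vals: "FW3 0 = 0" "FW3 (1/5) = 0" "FW3 (2/5) = 0" "FW3 (3/5) = 0" "FW3 (4/5) = 1" "FW3 1 = 1"
  by (simp_all add: FW3_def ramp_def)

lemma FQ3_mono: "x \<le> y \<Longrightarrow> FQ3 x \<le> FQ3 y" using cdf_ok.mono[OF cdf_FQ3] .
lemma FR3_mono: "0 \<le> e \<Longrightarrow> e \<le> 1/2 \<Longrightarrow> x \<le> y \<Longrightarrow> FR3 e x \<le> FR3 e y" using cdf_ok.mono[OF cdf_FR3] by blast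
lemma FW3_mono: "x \<le> y \<Longrightarrow> FW3 x \<le> FW3 y" using cdf_ok.mono[OF cdf_FW3] .

lemma key3: assumes e: "0 < e" "e \<le> 1/30" and h: "FR3 e t \<ge> 1/2 - e"
  shows "FQ3 t \<ge> 1/3 - 3*e"
proof (cases "t \<le> 1/5")
  case True
  then have "FR3 e t \<le> FR3 e (1/5)" using e by (intro FR3_mono) auto
  then show ?thesis using h e FR3_vals by simp
next
  case False
  show ?thesis
  proof (cases "t \<ge> 2/5")
    case True
    then have "FQ3 (2/5) \<le> FQ3 t" by (intro FQ3_mono)
    then show ?thesis using e FQ3_vals by simp
  next
    case F2: False
    define s where "s = ramp (1/5) (2/5) t"
    have r1: "ramp 0 (1/5) t = 1" using False by (intro ramp_hi) auto
    have r2: "ramp (2/5) (3/5) t = 0" using F2 by (intro ramp_lo) auto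
    have r3: "ramp (4/5) 1 t = 0" using F2 by (intro ramp_lo) auto
    have s01: "0 \<le> s" "s \<le> 1" unfolding s_def using ramp_bounds by auto
    have fr: "FR3 e t = 2*e + (1/2 - e) * s" unfolding FR3_def s_def r1 r2 r3 by simp
    have fq: "FQ3 t = s / 3" unfolding FQ3_def s_def r1 r2 r3 by simp
    have eq: "(1/2 - e) * (1 - s) = (1/2 - e) - (1/2 - e) * s" by (simp add: right_diff_distrib)
    have "(1/2 - e) * (1 - s) \<le> 2*e" using h fr eq by linarith
    moreover have "(1/4) * (1 - s) \<le> (1/2 - e) * (1 - s)" using e s01 by (intro mult_right_mono) auto
    moreover have "(1/4) * (1 - s) = 1/4 - s/4" by simp
    ultimately show ?thesis using fq e by linarith
  qed
qed

lemma core3: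
  fixes e aQ bQ aR bR aW bW :: real
  assumes e: "0 < e" "e \<le> 1/30"
    and rng: "0 \<le> aQ" "aQ \<le> bQ" "bQ \<le> 1" "0 \<le> aR" "aR \<le> bR" "bR \<le> 1" "0 \<le> aW" "aW \<le> bW" "bW \<le> 1"
    and dQR: "aQ < bQ \<Longrightarrow> aR < bR \<Longrightarrow> bQ \<le> aR \<or> bR \<le> aQ"
    and dQW: "aQ < bQ \<Longrightarrow> aW < bW \<Longrightarrow> bQ \<le> aW \<or> bW \<le> aQ"
    and dRW: "aR < bR \<Longrightarrow> aW < bW \<Longrightarrow> bR \<le> aW \<or> bW \<le> aR"
    and c0: "(aQ = 0 \<and> aQ < bQ) \<or> (aR = 0 \<and> aR < bR) \<or> (aW = 0 \<and> aW < bW)"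
    and c1: "(bQ = 1 \<and> aQ < bQ) \<or> (bR = 1 \<and> aR < bR) \<or> (bW = 1 \<and> aW < bW)"
    and efQ: "FR3 e bR - FR3 e aR \<ge> FR3 e bQ - FR3 e aQ"
    and efW: "FR3 e bR - FR3 e aR \<ge> FR3 e bW - FR3 e aW"
    and oQ: "FQ3 bQ - FQ3 aQ > 1/3 + 3*e"
    and oR: "FR3 e bR - FR3 e aR > 1/3 + 3*e"
    and oW: "FW3 bW - FW3 aW > 1/3 + 3*e"
  shows False
proof -
  have e2: "0 \<le> e" "e \<le> 1/2" using e by auto
  note mR = FR3_mono[OF e2]
  have neQ: "aQ < bQ" using oQ e rng by (cases "aQ < bQ") auto
  have neR: "aR < bR" using oR e rng by (cases "aR < bR") auto
  have neW: "aW < bW" using oW e rng by (cases "aW < bW") auto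
  have W1: "aW < 4/5"
  proof (rule ccontr)
    assume "\<not> aW < 4/5"
    then have "FW3 aW \<ge> FW3 (4/5)" "FW3 bW \<le> FW3 1" using rng by (auto intro!: FW3_mono)
    then show False using oW FW3_vals e by simp
  qed
  have W2: "bW > 3/5"
  proof (rule ccontr)
    assume "\<not> bW > 3/5"
    then have "FW3 bW \<le> FW3 (3/5)" "FW3 aW \<ge> FW3 0" using rng by (auto intro!: FW3_mono)
    then show False using oW FW3_vals e by simp
  qed
  have QW: "bQ \<le> aW"
  proof (rule ccontr)
    assume "\<not> bQ \<le> aW"
    then have "bW \<le> aQ" using dQW neQ neW by auto
    then have "FQ3 aQ \<ge> FQ3 (3/5)" "FQ3 bQ \<le> FQ3 1" using W2 rng by (auto intro!: FQ3_mono)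
    then show False using oQ FQ3_vals e by simp
  qed
  from dQR[OF neQ neR] show False
  proof
    assume RQ: "bQ \<le> aR"
    have aQ0: "aQ = 0" using c0 RQ QW neQ rng by auto
    have bQ: "bQ > 2/5"
    proof (rule ccontr)
      assume "\<not> bQ > 2/5"
      then have "FQ3 bQ \<le> FQ3 (2/5)" by (intro FQ3_mono) auto
      then show False using oQ aQ0 FQ3_vals e by simp
    qed
    have "FR3 e bQ \<ge> FR3 e (2/5)" using bQ by (intro mR) auto
    moreover have "FR3 e aR \<ge> FR3 e (2/5)" using bQ RQ by (intro mR) auto
    moreover have "FR3 e bR \<le> FR3 e 1" using rng by (intro mR) auto
    ultimately show False using efQ aQ0 FR3_vals e by simp
  next
    assume RQ: "bR \<le> aQ"
    have bW1: "bW = 1" using c1 RQ QW W1 neQ neR rng by auto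
    have "FR3 e aW \<le> FR3 e (4/5)" using W1 by (intro mR) auto
    then have "FR3 e bR - FR3 e aR \<ge> 1/2 - e" using efW bW1 FR3_vals by simp
    moreover have "FR3 e aR \<ge> FR3 e 0" using rng by (intro mR) auto
    moreover have "FR3 e bR \<le> FR3 e aQ" using RQ by (intro mR) auto
    ultimately have "FR3 e aQ \<ge> 1/2 - e" using FR3_vals by simp
    then have "FQ3 aQ \<ge> 1/3 - 3*e" using key3 e by blast
    moreover have "FQ3 bQ \<le> FQ3 (4/5)" using QW W1 by (intro FQ3_mono) auto
    ultimately show False using oQ FQ3_vals by simp
  qed
qed




lemma div_ends:
  assumes "division n X"
  shows "\<exists>a b. \<forall>i<n. 0 \<le> a i \<and> a i \<le> b i \<and> b i \<le> 1 \<and> X i = {a i<..<b i}"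
proof -
  have "\<forall>i\<in>{..<n}. \<exists>p. 0 \<le> fst p \<and> fst p \<le> snd p \<and> snd p \<le> 1 \<and> X i = {fst p<..<snd p}"
    using assms unfolding division_def open_subinterval_def by force
  then obtain f where f: "\<forall>i\<in>{..<n}. 0 \<le> fst (f i) \<and> fst (f i) \<le> snd (f i) \<and> snd (f i) \<le> 1 \<and> X i = {fst (f i)<..<snd (f i)}"
    by (metis bchoice)
  show ?thesis by (rule exI[of _ "\<lambda>i. fst (f i)"], rule exI[of _ "\<lambda>i. snd (f i)"]) (use f in auto)
qed

lemma disj_ends:
  fixes a b c d :: real
  assumes "a < b" "c < d" "{a<..<b} \<inter> {c<..<d} = {}"
  shows "b \<le> c \<or> d \<le> a"
proof (rule ccontr)
  assume "\<not> (b \<le> c \<or> d \<le> a)"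
  then have h: "max a c < min b d" using assms by auto
  define m where "m = (max a c + min b d) / 2"
  have "m \<in> {a<..<b} \<inter> {c<..<d}" using h unfolding m_def by auto
  then show False using assms by auto
qed

lemma clos_ends:
  fixes a b x :: real
  assumes "a \<le> b" "x \<in> closure {a<..<b}"
  shows "a < b \<and> a \<le> x \<and> x \<le> b"
proof (cases "a = b")
  case True then show ?thesis using assms by simp
next
  case False
  then have "a < b" using assms by simp
  then show ?thesis using assms by (simp add: closure_greaterThanLessThan)
qed

lemma open_sub: "0 \<le> a \<Longrightarrow> a \<le> b \<Longrightarrow> b \<le> 1 \<Longrightarrow> open_subinterval {a<..<b}"
  unfolding open_subinterval_def by blast

lemma eg_ge:
  assumes "n > 0" "\<And>i. i < n \<Longrightarrow> c \<le> u v X i i"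
  shows "c \<le> eg n v X"
  unfolding eg_def using assms by (subst Min_ge_iff) auto

lemma eg_le:
  assumes "i < n"
  shows "eg n v X \<le> u v X i i"
  unfolding eg_def using assms by (intro Min_le) auto




lemma lt3: "i < (3::nat) \<Longrightarrow> i = 0 \<or> i = 1 \<or> i = 2" by auto

lemma thm3:
  fixes \<delta> :: real
  assumes "\<delta> > 0"
  shows "\<exists>v \<alpha>. cake_instance 3 v \<and> egalitarian_dumping_paradox 3 v \<alpha> \<and> \<alpha> \<ge> real 3 / 2 - \<delta>"
proof -
  define e where "e = (if \<delta> < 1 then \<delta>/30 else 1/30)"
  have e: "0 < e" "e \<le> 1/30" using assms by (auto simp: e_def)
  define v :: "nat \<Rightarrow> real measure" where
    "v i = (if i = 0 then V FQ3 else if i = 1 then V (FR3 e) else V FW3)" for i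
  define \<alpha> where "\<alpha> = (1/2 - e) / (1/3 + 3*e)"
  define Y :: "nat \<Rightarrow> real set" where
    "Y i = (if i = 0 then {1/5<..<3/5} else if i = 1 then {4/5<..<1} else {3/5<..<4/5})" for i
  have cQ: "cdf_ok FQ3" by (rule cdf_FQ3)
  have cR: "cdf_ok (FR3 e)" using e by (intro cdf_FR3) auto
  have cW: "cdf_ok FW3" by (rule cdf_FW3)
  note mQ = cdf_ok.Ioo[OF cQ] and mR = cdf_ok.Ioo[OF cR] and mW = cdf_ok.Ioo[OF cW]
  have inst: "cake_instance 3 v"
    unfolding cake_instance_def v_def
    using cdf_ok.valuation[OF cQ] cdf_ok.valuation[OF cR] cdf_ok.valuation[OF cW] by auto
  have Y0: "Y 0 = {1/5<..<3/5}" and Y1: "Y 1 = {4/5<..<1}" and Y2: "Y 2 = {3/5<..<4/5}" by (simp_all add: Y_def)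
  have divY: "division 3 Y"
    unfolding division_def
  proof (intro conjI allI impI)
    fix i assume "i < (3::nat)"
    then show "open_subinterval (Y i)" by (auto dest!: lt3 simp: Y0 Y1 Y2 Y1[unfolded One_nat_def] intro!: open_sub)
  next
    fix i j assume "i < (3::nat)" "j < 3" "i \<noteq> j"
    then show "Y i \<inter> Y j = {}" by (auto dest!: lt3 simp: Y0 Y1 Y2 Y1[unfolded One_nat_def])
  qed
  have notc: "\<not> complete_division 3 Y"
  proof
    assume "complete_division 3 Y"
    then have "(0::real) \<in> (\<Union>i<3. closure (Y i))" unfolding complete_division_def by auto
    then obtain i where "i < (3::nat)" "(0::real) \<in> closure (Y i)" by auto
    then show False by (auto dest!: lt3 simp: Y0 Y1 Y2 Y1[unfolded One_nat_def] closure_greaterThanLessThan)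
  qed
  have pY: "partial_division 3 Y" unfolding partial_division_def using divY notc by auto
  have v0: "v 0 = V FQ3" and v1: "v 1 = V (FR3 e)" and v2: "v 2 = V FW3" by (simp_all add: v_def)
  have uY: "u v Y 0 0 = 2/3" "u v Y 0 1 = 1/3" "u v Y 0 2 = 0"
    "u v Y 1 0 = 1/2 - e" "u v Y 1 1 = 1/2 - e" "u v Y 1 2 = 0"
    "u v Y 2 0 = 0" "u v Y 2 1 = 0" "u v Y 2 2 = 1"
    unfolding u_def Y0 Y1 Y2 v0 v1 v2
    by (simp_all add: mQ mR mW FQ3_vals FR3_vals FW3_vals)
  have efY: "envy_free 3 v Y"
    unfolding envy_free_def
  proof (intro allI impI)
    fix i j :: nat assume "i < 3" "j < 3"
    then show "u v Y i j \<le> u v Y i i" using e by (auto dest!: lt3 simp: uY uY[unfolded One_nat_def])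
  qed
  have egY: "1/2 - e \<le> eg 3 v Y"
    by (rule eg_ge) (use e in \<open>auto dest!: lt3 simp: uY uY[unfolded One_nat_def]\<close>)
  have bound: "eg 3 v X \<le> 1/3 + 3*e" if cX: "complete_division 3 X" "envy_free 3 v X" for X
  proof (rule ccontr)
    assume "\<not> eg 3 v X \<le> 1/3 + 3*e"
    then have big: "u v X i i > 1/3 + 3*e" if "i < 3" for i
      using eg_le[OF that, of v X] by linarith
    have dX: "division 3 X" using cX unfolding complete_division_def by auto
    obtain a b where ab: "\<forall>i<3. 0 \<le> a i \<and> a i \<le> b i \<and> b i \<le> 1 \<and> X i = {a i<..<b i}"
      using div_ends[OF dX] by blast
    have ab0: "0 \<le> a 0" "a 0 \<le> b 0" "b 0 \<le> 1" "X 0 = {a 0<..<b 0}" using ab by auto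
    have ab1: "0 \<le> a 1" "a 1 \<le> b 1" "b 1 \<le> 1" "X 1 = {a 1<..<b 1}" using ab by auto
    have ab2: "0 \<le> a 2" "a 2 \<le> b 2" "b 2 \<le> 1" "X 2 = {a 2<..<b 2}" using ab by auto
    have uX: "u v X i j = (if i = 0 then FQ3 else if i = 1 then FR3 e else FW3) (b j)
      - (if i = 0 then FQ3 else if i = 1 then FR3 e else FW3) (a j)" if "j < 3" for i j
      using ab that unfolding u_def v_def by (auto simp: mQ mR mW)
    have disj: "a i < b i \<Longrightarrow> a j < b j \<Longrightarrow> b i \<le> a j \<or> b j \<le> a i" if "i < 3" "j < 3" "i \<noteq> j" for i j
      using dX that ab unfolding division_def by (intro disj_ends) auto
    have cov: "\<exists>i<3. a i < b i \<and> a i \<le> x \<and> x \<le> b i" if "x \<in> {0..1}" for x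
    proof -
      have "x \<in> (\<Union>i<3. closure (X i))" using cX(1) that unfolding complete_division_def by auto
      then obtain i where "i < (3::nat)" "x \<in> closure (X i)" by auto
      then show ?thesis using ab clos_ends by metis
    qed
    have c0: "(a 0 = 0 \<and> a 0 < b 0) \<or> (a 1 = 0 \<and> a 1 < b 1) \<or> (a 2 = 0 \<and> a 2 < b 2)"
      using cov[of 0] ab by (auto dest!: lt3 simp: order_antisym)
    have c1: "(b 0 = 1 \<and> a 0 < b 0) \<or> (b 1 = 1 \<and> a 1 < b 1) \<or> (b 2 = 1 \<and> a 2 < b 2)"
      using cov[of 1] ab by (auto dest!: lt3 simp: order_antisym)
    have ef: "u v X 1 1 \<ge> u v X 1 j" if "j < 3" for j using cX(2) that unfolding envy_free_def by auto
    show False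
      apply (rule core3[OF e ab0(1-3) ab1(1-3) ab2(1-3)])
      using disj[of 0 1] disj[of 0 2] disj[of 1 2] c0 c1 ef[of 0] ef[of 2] big[of 0] big[of 1] big[of 2]
      by (simp_all add: uX)
  qed
  have A: "1/2 - e > 0" "1/3 + 3*e > 0" using e by auto
  have al: "\<alpha> * (1/3 + 3*e) = 1/2 - e" unfolding \<alpha>_def using A by simp
  have a1: "\<alpha> > 1" unfolding \<alpha>_def using A e by (simp add: pos_less_divide_eq)
  have para: "egalitarian_dumping_paradox 3 v \<alpha>"
    unfolding egalitarian_dumping_paradox_def
  proof (intro conjI exI[of _ Y] allI impI a1 pY efY)
    fix X assume "complete_division 3 X \<and> envy_free 3 v X"
    then have "eg 3 v X \<le> 1/3 + 3*e" using bound by auto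
    then have "\<alpha> * eg 3 v X \<le> \<alpha> * (1/3 + 3*e)" using a1 by (intro mult_left_mono) auto
    then show "\<alpha> * eg 3 v X \<le> eg 3 v Y" using al egY by linarith
  qed
  have ad: "\<alpha> \<ge> real 3 / 2 - \<delta>"
  proof (cases "\<delta> < 1")
    case False then show ?thesis using a1 by simp
  next
    case True
    then have ed: "e = \<delta>/30" by (simp add: e_def)
    have "(3/2 - \<delta>) * (1/3 + 3*e) \<le> 1/2 - e"
    proof -
      have "(3/2 - \<delta>) * (1/3 + 3*e) = 1/2 + 9/2*e - \<delta>/3 - 3*\<delta>*e" by (simp add: algebra_simps)
      moreover have "\<delta> * e \<ge> 0" using assms e by simp
      ultimately show ?thesis using ed assms by linarith
    qed
    then show ?thesis unfolding \<alpha>_def using A by (simp add: pos_le_divide_eq)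
  qed
  show ?thesis using inst para ad by blast
qed




definition FQ4 :: "real \<Rightarrow> real" where
  "FQ4 t = 1/4 * ramp (1/7) (2/7) t + 1/4 * ramp (2/7) (3/7) t + 1/4 * ramp (4/7) (5/7) t + 1/4 * ramp (6/7) 1 t"
definition FR4 :: "real \<Rightarrow> real \<Rightarrow> real" where
  "FR4 e t = 2*e * ramp 0 (1/7) t + (1/2 - e) * ramp (1/7) (2/7) t + (1/2 - e) * ramp (6/7) 1 t"
definition FA4 :: "real \<Rightarrow> real" where
  "FA4 t = 1 * ramp (3/7) (4/7) t"
definition FB4 :: "real \<Rightarrow> real" where
  "FB4 t = 1 * ramp (5/7) (6/7) t"

lemma cdf_FQ4: "cdf_ok FQ4"
  unfolding FQ4_def
  by (rule okp_cdf, rule okp_cong[where a="1/4+1/4+1/4+1/4"]) (intro okp_add okp_ramp | simp)+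

lemma cdf_FR4: "0 \<le> e \<Longrightarrow> e \<le> 1/2 \<Longrightarrow> cdf_ok (FR4 e)"
  unfolding FR4_def
  by (rule okp_cdf, rule okp_cong[where a="2*e+(1/2-e)+(1/2-e)"]) (intro okp_add okp_ramp | simp)+

lemma cdf_FA4: "cdf_ok FA4"
  unfolding FA4_def
  by (rule okp_cdf, rule okp_cong[where a="1"]) (intro okp_add okp_ramp | simp)+

lemma cdf_FB4: "cdf_ok FB4"
  unfolding FB4_def
  by (rule okp_cdf, rule okp_cong[where a="1"]) (intro okp_add okp_ramp | simp)+

lemma FQ4_vals: "FQ4 0 = 0" "FQ4 (1/7) = 0" "FQ4 (2/7) = 1/4" "FQ4 (3/7) = 1/2" "FQ4 (4/7) = 1/2"
   "FQ4 (5/7) = 3/4" "FQ4 (6/7) = 3/4" "FQ4 1 = 1"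
  by (simp_all add: FQ4_def ramp_def)
lemma FR4_vals: "FR4 e 0 = 0" "FR4 e (1/7) = 2*e" "FR4 e (2/7) = 1/2 + e" "FR4 e (3/7) = 1/2 + e"
  "FR4 e (4/7) = 1/2 + e" "FR4 e (5/7) = 1/2 + e" "FR4 e (6/7) = 1/2 + e" "FR4 e 1 = 1"
  by (simp_all add: FR4_def ramp_def)
lemma FA4_vals: "FA4 0 = 0" "FA4 (1/7) = 0" "FA4 (3/7) = 0" "FA4 (4/7) = 1" "FA4 (5/7) = 1" "FA4 (6/7) = 1" "FA4 1 = 1"
  by (simp_all add: FA4_def ramp_def)
lemma FB4_vals: "FB4 0 = 0" "FB4 (1/7) = 0" "FB4 (3/7) = 0" "FB4 (4/7) = 0" "FB4 (5/7) = 0" "FB4 (6/7) = 1" "FB4 1 = 1"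
  by (simp_all add: FB4_def ramp_def)

lemma FQ4_mono: "x \<le> y \<Longrightarrow> FQ4 x \<le> FQ4 y" using cdf_ok.mono[OF cdf_FQ4] .
lemma FR4_mono: "0 \<le> e \<Longrightarrow> e \<le> 1/2 \<Longrightarrow> x \<le> y \<Longrightarrow> FR4 e x \<le> FR4 e y" using cdf_ok.mono[OF cdf_FR4] by blast
lemma FA4_mono: "x \<le> y \<Longrightarrow> FA4 x \<le> FA4 y" using cdf_ok.mono[OF cdf_FA4] .
lemma FB4_mono: "x \<le> y \<Longrightarrow> FB4 x \<le> FB4 y" using cdf_ok.mono[OF cdf_FB4] .

lemma key4: assumes e: "0 < e" "e \<le> 1/30" and h: "FR4 e t \<ge> 1/2 - e"
  shows "FQ4 t \<ge> 1/4 - 2*e"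
proof (cases "t \<le> 1/7")
  case True
  then have "FR4 e t \<le> FR4 e (1/7)" using e by (intro FR4_mono) auto
  then show ?thesis using h e FR4_vals by simp
next
  case False
  show ?thesis
  proof (cases "t \<ge> 2/7")
    case True
    then have "FQ4 (2/7) \<le> FQ4 t" by (intro FQ4_mono)
    then show ?thesis using e FQ4_vals by simp
  next
    case F2: False
    define s where "s = ramp (1/7) (2/7) t"
    have r1: "ramp 0 (1/7) t = 1" using False by (intro ramp_hi) auto
    have r2: "ramp (2/7) (3/7) t = 0" using F2 by (intro ramp_lo) auto
    have r3: "ramp (4/7) (5/7) t = 0" using F2 by (intro ramp_lo) auto
    have r4: "ramp (6/7) 1 t = 0" using F2 by (intro ramp_lo) auto
    have s01: "0 \<le> s" "s \<le> 1" unfolding s_def using ramp_bounds by auto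
    have fr: "FR4 e t = 2*e + (1/2 - e) * s" unfolding FR4_def s_def r1 r2 r3 r4 by simp
    have fq: "FQ4 t = s / 4" unfolding FQ4_def s_def r1 r2 r3 r4 by simp
    have eq: "(1/2 - e) * (1 - s) = (1/2 - e) - (1/2 - e) * s" by (simp add: right_diff_distrib)
    have "(1/2 - e) * (1 - s) \<le> 2*e" using h fr eq by linarith
    moreover have "(1/4) * (1 - s) \<le> (1/2 - e) * (1 - s)" using e s01 by (intro mult_right_mono) auto
    moreover have "(1/4) * (1 - s) = 1/4 - s/4" by simp
    ultimately show ?thesis using fq e by linarith
  qed
qed

lemma core4:
  fixes e aQ bQ aR bR aA bA aB bB :: real
  assumes e: "0 < e" "e \<le> 1/30"
    and rng: "0 \<le> aQ" "aQ \<le> bQ" "bQ \<le> 1" "0 \<le> aR" "aR \<le> bR" "bR \<le> 1"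
       "0 \<le> aA" "aA \<le> bA" "bA \<le> 1" "0 \<le> aB" "aB \<le> bB" "bB \<le> 1"
    and dQR: "aQ < bQ \<Longrightarrow> aR < bR \<Longrightarrow> bQ \<le> aR \<or> bR \<le> aQ"
    and dQA: "aQ < bQ \<Longrightarrow> aA < bA \<Longrightarrow> bQ \<le> aA \<or> bA \<le> aQ"
    and dQB: "aQ < bQ \<Longrightarrow> aB < bB \<Longrightarrow> bQ \<le> aB \<or> bB \<le> aQ"
    and dAB: "aA < bA \<Longrightarrow> aB < bB \<Longrightarrow> bA \<le> aB \<or> bB \<le> aA"
    and c0: "(aQ = 0 \<and> aQ < bQ) \<or> (aR = 0 \<and> aR < bR) \<or> (aA = 0 \<and> aA < bA) \<or> (aB = 0 \<and> aB < bB)"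
    and c1: "(bQ = 1 \<and> aQ < bQ) \<or> (bR = 1 \<and> aR < bR) \<or> (bA = 1 \<and> aA < bA) \<or> (bB = 1 \<and> aB < bB)"
    and efQ: "FR4 e bR - FR4 e aR \<ge> FR4 e bQ - FR4 e aQ"
    and efB: "FR4 e bR - FR4 e aR \<ge> FR4 e bB - FR4 e aB"
    and oQ: "FQ4 bQ - FQ4 aQ > 1/4 + 3*e"
    and oR: "FR4 e bR - FR4 e aR > 1/4 + 3*e"
    and oA: "FA4 bA - FA4 aA > 1/4 + 3*e"
    and oB: "FB4 bB - FB4 aB > 1/4 + 3*e"
  shows False
proof -
  have e2: "0 \<le> e" "e \<le> 1/2" using e by auto
  note mR = FR4_mono[OF e2]
  have neQ: "aQ < bQ" using oQ e rng by (cases "aQ < bQ") auto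
  have neR: "aR < bR" using oR e rng by (cases "aR < bR") auto
  have neA: "aA < bA" using oA e rng by (cases "aA < bA") auto
  have neB: "aB < bB" using oB e rng by (cases "aB < bB") auto
  have A1: "aA < 4/7"
  proof (rule ccontr)
    assume "\<not> aA < 4/7"
    then have "FA4 aA \<ge> FA4 (4/7)" "FA4 bA \<le> FA4 1" using rng by (auto intro!: FA4_mono)
    then show False using oA FA4_vals e by simp
  qed
  have A2: "bA > 3/7"
  proof (rule ccontr)
    assume "\<not> bA > 3/7"
    then have "FA4 bA \<le> FA4 (3/7)" "FA4 aA \<ge> FA4 0" using rng by (auto intro!: FA4_mono)
    then show False using oA FA4_vals e by simp
  qed
  have B1: "aB < 6/7"
  proof (rule ccontr)
    assume "\<not> aB < 6/7"
    then have "FB4 aB \<ge> FB4 (6/7)" "FB4 bB \<le> FB4 1" using rng by (auto intro!: FB4_mono)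
    then show False using oB FB4_vals e by simp
  qed
  have B2: "bB > 5/7"
  proof (rule ccontr)
    assume "\<not> bB > 5/7"
    then have "FB4 bB \<le> FB4 (5/7)" "FB4 aB \<ge> FB4 0" using rng by (auto intro!: FB4_mono)
    then show False using oB FB4_vals e by simp
  qed
  have AB: "bA \<le> aB" using dAB[OF neA neB] A1 B2 neB by auto
  have QA: "bQ \<le> aA"
  proof (rule ccontr)
    assume "\<not> bQ \<le> aA"
    then have aQ: "aQ \<ge> bA" using dQA neQ neA by auto
    from dQB[OF neQ neB] show False
    proof
      assume "bQ \<le> aB"
      then have "FQ4 aQ \<ge> FQ4 (3/7)" "FQ4 bQ \<le> FQ4 (6/7)" using aQ A2 B1 by (auto intro!: FQ4_mono)
      then show False using oQ FQ4_vals e by simp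
    next
      assume "bB \<le> aQ"
      then have "FQ4 aQ \<ge> FQ4 (5/7)" "FQ4 bQ \<le> FQ4 1" using B2 rng by (auto intro!: FQ4_mono)
      then show False using oQ FQ4_vals e by simp
    qed
  qed
  from dQR[OF neQ neR] show False
  proof
    assume RQ: "bQ \<le> aR"
    have aQ0: "aQ = 0" using c0 RQ QA AB A2 neQ rng by auto
    have bQ: "bQ > 2/7"
    proof (rule ccontr)
      assume "\<not> bQ > 2/7"
      then have "FQ4 bQ \<le> FQ4 (2/7)" by (intro FQ4_mono) auto
      then show False using oQ aQ0 FQ4_vals e by simp
    qed
    have "FR4 e bQ \<ge> FR4 e (2/7)" using bQ by (intro mR) auto
    moreover have "FR4 e aR \<ge> FR4 e (2/7)" using bQ RQ by (intro mR) auto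
    moreover have "FR4 e bR \<le> FR4 e 1" using rng by (intro mR) auto
    ultimately show False using efQ aQ0 FR4_vals e by simp
  next
    assume RQ: "bR \<le> aQ"
    have bB1: "bB = 1" using c1 RQ QA AB A1 B1 neQ neR rng by auto
    have "FR4 e aB \<le> FR4 e (6/7)" using B1 by (intro mR) auto
    then have "FR4 e bR - FR4 e aR \<ge> 1/2 - e" using efB bB1 FR4_vals by simp
    moreover have "FR4 e aR \<ge> FR4 e 0" using rng by (intro mR) auto
    moreover have "FR4 e bR \<le> FR4 e aQ" using RQ by (intro mR) auto
    ultimately have "FR4 e aQ \<ge> 1/2 - e" using FR4_vals by simp
    then have "FQ4 aQ \<ge> 1/4 - 2*e" using key4 e by blast
    moreover have "FQ4 bQ \<le> FQ4 (4/7)" using QA A1 by (intro FQ4_mono) auto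
    ultimately show False using oQ FQ4_vals e by simp
  qed
qed




lemma lt4: "i < (4::nat) \<Longrightarrow> i = 0 \<or> i = 1 \<or> i = 2 \<or> i = 3" by auto

lemma thm4:
  fixes \<delta> :: real
  assumes "\<delta> > 0"
  shows "\<exists>v \<alpha>. cake_instance 4 v \<and> egalitarian_dumping_paradox 4 v \<alpha> \<and> \<alpha> \<ge> real 4 / 2 - \<delta>"
proof -
  define e where "e = (if \<delta> < 1 then \<delta>/30 else 1/30)"
  have e: "0 < e" "e \<le> 1/30" using assms by (auto simp: e_def)
  define v :: "nat \<Rightarrow> real measure" where
    "v i = (if i = 0 then V FQ4 else if i = 1 then V (FR4 e) else if i = 2 then V FA4 else V FB4)" for i
  define \<alpha> where "\<alpha> = (1/2 - e) / (1/4 + 3*e)"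
  define Y :: "nat \<Rightarrow> real set" where
    "Y i = (if i = 0 then {1/7<..<3/7} else if i = 1 then {6/7<..<1} else if i = 2 then {3/7<..<4/7} else {5/7<..<6/7})" for i
  have cQ: "cdf_ok FQ4" by (rule cdf_FQ4)
  have cR: "cdf_ok (FR4 e)" using e by (intro cdf_FR4) auto
  have cA: "cdf_ok FA4" by (rule cdf_FA4)
  have cB: "cdf_ok FB4" by (rule cdf_FB4)
  note mQ = cdf_ok.Ioo[OF cQ] and mR = cdf_ok.Ioo[OF cR] and mA = cdf_ok.Ioo[OF cA] and mB = cdf_ok.Ioo[OF cB]
  have inst: "cake_instance 4 v"
    unfolding cake_instance_def v_def
    using cdf_ok.valuation[OF cQ] cdf_ok.valuation[OF cR] cdf_ok.valuation[OF cA] cdf_ok.valuation[OF cB] by auto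
  have Y0: "Y 0 = {1/7<..<3/7}" and Y1: "Y 1 = {6/7<..<1}" and Y2: "Y 2 = {3/7<..<4/7}" and Y3: "Y 3 = {5/7<..<6/7}" by (simp_all add: Y_def)
  have divY: "division 4 Y"
    unfolding division_def
  proof (intro conjI allI impI)
    fix i assume "i < (4::nat)"
    then show "open_subinterval (Y i)" by (auto dest!: lt4 simp: Y0 Y1 Y2 Y3 Y1[unfolded One_nat_def] intro!: open_sub)
  next
    fix i j assume "i < (4::nat)" "j < 4" "i \<noteq> j"
    then show "Y i \<inter> Y j = {}" by (auto dest!: lt4 simp: Y0 Y1 Y2 Y3 Y1[unfolded One_nat_def])
  qed
  have notc: "\<not> complete_division 4 Y"
  proof
    assume "complete_division 4 Y"
    then have "(0::real) \<in> (\<Union>i<4. closure (Y i))" unfolding complete_division_def by auto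
    then obtain i where "i < (4::nat)" "(0::real) \<in> closure (Y i)" by auto
    then show False by (auto dest!: lt4 simp: Y0 Y1 Y2 Y3 Y1[unfolded One_nat_def] closure_greaterThanLessThan)
  qed
  have pY: "partial_division 4 Y" unfolding partial_division_def using divY notc by auto
  have v0: "v 0 = V FQ4" and v1: "v 1 = V (FR4 e)" and v2: "v 2 = V FA4" and v3: "v 3 = V FB4" by (simp_all add: v_def)
  have uY: "u v Y 0 0 = 1/2" "u v Y 0 1 = 1/4" "u v Y 0 2 = 0" "u v Y 0 3 = 0"
    "u v Y 1 0 = 1/2 - e" "u v Y 1 1 = 1/2 - e" "u v Y 1 2 = 0" "u v Y 1 3 = 0"
    "u v Y 2 0 = 0" "u v Y 2 1 = 0" "u v Y 2 2 = 1" "u v Y 2 3 = 0"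
    "u v Y 3 0 = 0" "u v Y 3 1 = 0" "u v Y 3 2 = 0" "u v Y 3 3 = 1"
    unfolding u_def Y0 Y1 Y2 Y3 v0 v1 v2 v3
    by (simp_all add: mQ mR mA mB FQ4_vals FR4_vals FA4_vals FB4_vals)
  have efY: "envy_free 4 v Y"
    unfolding envy_free_def
  proof (intro allI impI)
    fix i j :: nat assume "i < 4" "j < 4"
    then show "u v Y i j \<le> u v Y i i" using e by (auto dest!: lt4 simp: uY uY[unfolded One_nat_def])
  qed
  have egY: "1/2 - e \<le> eg 4 v Y"
    by (rule eg_ge) (use e in \<open>auto dest!: lt4 simp: uY uY[unfolded One_nat_def]\<close>)
  have bound: "eg 4 v X \<le> 1/4 + 3*e" if cX: "complete_division 4 X" "envy_free 4 v X" for X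
  proof (rule ccontr)
    assume "\<not> eg 4 v X \<le> 1/4 + 3*e"
    then have big: "u v X i i > 1/4 + 3*e" if "i < 4" for i
      using eg_le[OF that, of v X] by linarith
    have dX: "division 4 X" using cX unfolding complete_division_def by auto
    obtain a b where ab: "\<forall>i<4. 0 \<le> a i \<and> a i \<le> b i \<and> b i \<le> 1 \<and> X i = {a i<..<b i}"
      using div_ends[OF dX] by blast
    have ab0: "0 \<le> a 0" "a 0 \<le> b 0" "b 0 \<le> 1" "X 0 = {a 0<..<b 0}" using ab by auto
    have ab1: "0 \<le> a 1" "a 1 \<le> b 1" "b 1 \<le> 1" "X 1 = {a 1<..<b 1}" using ab by auto
    have ab2: "0 \<le> a 2" "a 2 \<le> b 2" "b 2 \<le> 1" "X 2 = {a 2<..<b 2}" using ab by auto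
    have ab3: "0 \<le> a 3" "a 3 \<le> b 3" "b 3 \<le> 1" "X 3 = {a 3<..<b 3}" using ab by auto
    have uX: "u v X i j = (if i = 0 then FQ4 else if i = 1 then FR4 e else if i = 2 then FA4 else FB4) (b j)
      - (if i = 0 then FQ4 else if i = 1 then FR4 e else if i = 2 then FA4 else FB4) (a j)" if "j < 4" for i j
      using ab that unfolding u_def v_def by (auto simp: mQ mR mA mB)
    have disj: "a i < b i \<Longrightarrow> a j < b j \<Longrightarrow> b i \<le> a j \<or> b j \<le> a i" if "i < 4" "j < 4" "i \<noteq> j" for i j
      using dX that ab unfolding division_def by (intro disj_ends) auto
    have cov: "\<exists>i<4. a i < b i \<and> a i \<le> x \<and> x \<le> b i" if "x \<in> {0..1}" for x
    proof -
      have "x \<in> (\<Union>i<4. closure (X i))" using cX(1) that unfolding complete_division_def by auto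
      then obtain i where "i < (4::nat)" "x \<in> closure (X i)" by auto
      then show ?thesis using ab clos_ends by metis
    qed
    have c0: "(a 0 = 0 \<and> a 0 < b 0) \<or> (a 1 = 0 \<and> a 1 < b 1) \<or> (a 2 = 0 \<and> a 2 < b 2) \<or> (a 3 = 0 \<and> a 3 < b 3)"
      using cov[of 0] ab by (auto dest!: lt4 simp: order_antisym)
    have c1: "(b 0 = 1 \<and> a 0 < b 0) \<or> (b 1 = 1 \<and> a 1 < b 1) \<or> (b 2 = 1 \<and> a 2 < b 2) \<or> (b 3 = 1 \<and> a 3 < b 3)"
      using cov[of 1] ab by (auto dest!: lt4 simp: order_antisym)
    have ef: "u v X 1 1 \<ge> u v X 1 j" if "j < 4" for j using cX(2) that unfolding envy_free_def by auto
    show False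
      apply (rule core4[OF e ab0(1-3) ab1(1-3) ab2(1-3) ab3(1-3)])
      using disj[of 0 1] disj[of 0 2] disj[of 0 3] disj[of 2 3] c0 c1 ef[of 0] ef[of 3] big[of 0] big[of 1] big[of 2] big[of 3]
      by (simp_all add: uX)
  qed
  have A: "1/2 - e > 0" "1/4 + 3*e > 0" using e by auto
  have al: "\<alpha> * (1/4 + 3*e) = 1/2 - e" unfolding \<alpha>_def using A by simp
  have a1: "\<alpha> > 1" unfolding \<alpha>_def using A e by (simp add: pos_less_divide_eq)
  have para: "egalitarian_dumping_paradox 4 v \<alpha>"
    unfolding egalitarian_dumping_paradox_def
  proof (intro conjI exI[of _ Y] allI impI a1 pY efY)
    fix X assume "complete_division 4 X \<and> envy_free 4 v X"
    then have "eg 4 v X \<le> 1/4 + 3*e" using bound by auto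
    then have "\<alpha> * eg 4 v X \<le> \<alpha> * (1/4 + 3*e)" using a1 by (intro mult_left_mono) auto
    then show "\<alpha> * eg 4 v X \<le> eg 4 v Y" using al egY by linarith
  qed
  have ad: "\<alpha> \<ge> real 4 / 2 - \<delta>"
  proof (cases "\<delta> < 1")
    case False then show ?thesis using a1 by simp
  next
    case True
    then have ed: "e = \<delta>/30" by (simp add: e_def)
    have "(2 - \<delta>) * (1/4 + 3*e) \<le> 1/2 - e"
    proof -
      have "(2 - \<delta>) * (1/4 + 3*e) = 1/2 + 6*e - \<delta>/4 - 3*\<delta>*e" by (simp add: field_simps)
      moreover have "\<delta> * e \<ge> 0" using assms e by simp
      ultimately show ?thesis using ed assms by linarith
    qed
    then show ?thesis unfolding \<alpha>_def using A by (simp add: pos_le_divide_eq)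
  qed
  show ?thesis using inst para ad by blast
qed



theorem theorem3:
  fixes n :: nat and \<delta> :: real
  assumes "n \<in> {3, 4}" and "\<delta> > 0"
  shows "\<exists>v \<alpha>. cake_instance n v \<and> egalitarian_dumping_paradox n v \<alpha> \<and> \<alpha> \<ge> real n / 2 - \<delta>"
proof -
  from assms(1) have "n = 3 \<or> n = 4" by auto
  then show ?thesis
  proof
    assume "n = 3" then show ?thesis using thm3[OF assms(2)] by simp
  next
    assume "n = 4" then show ?thesis using thm4[OF assms(2)] by simp
  qed
qed

end
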